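(* Let $c$ be constant. Then for all integers $a\ge b\ge0$, $$Y(z^a\bar z^b)=az^{a-1}\bar z^b-mc\sum_{0\le k\le (a-b-1)/m}(-1)^{mk}z^{a-mk-1}\bar z^{b+mk},$$ and for all integers $b\ge a\ge0$, $$Y(z^a\bar z^b)=az^{a-1}\bar z^b+mc\sum_{1\le k\le (b-a)/m}(-1)^{mk}z^{a+mk-1}\bar z^{b-mk}.$$
   Context: Let $m\ge2$, $\zeta=e^{2\pi i/m}$, and let $z,\bar z$ be independent variables. For $j=0,\dots,m-1$ let $s_j$ be the algebra automorphism of $\mathbb C[z,\bar z]$ with $s_j(z)=-\zeta^j\bar z$, $s_j(\bar z)=-\zeta^{-j}z$ (these generate the dihedral group $I_2(m)$; the $s_j$ are its reflections). For a constant $c\in\mathbb C$ define the (Dunkl) operator $Y$ on $\mathbb C[z,\bar z]$ by $Y(q)=\frac{\partial q}{\partial z}-c\sum_{j=0}^{m-1}\frac{q-s_j(q)}{z+\zeta^j\bar z}$. *)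

theory Defs
  imports Complex_Main "HOL-Computational_Algebra.Polynomial"
begin

text \<open>C[z, zbar] is represented as complex poly poly: the outer variable is z,
  coefficients are polynomials in zbar.\<close>

definition Zv :: "complex poly poly" where "Zv = [:0, 1:]"
definition Zbv :: "complex poly poly" where "Zbv = [:[:0, 1:]:]"

definition const2 :: "complex \<Rightarrow> complex poly poly" where "const2 x = [:[:x:]:]"

text \<open>Substitution z := u, zbar := v (a ring homomorphism of C[z,zbar]).\<close>
definition subst2 :: "complex poly poly \<Rightarrow> complex poly poly \<Rightarrow> complex poly poly \<Rightarrow> complex poly poly" where
  "subst2 q u v = (\<Sum>i\<le>degree q. poly (map_poly const2 (coeff q i)) v * u ^ i)"

definition zeta :: "nat \<Rightarrow> complex" where "zeta m = cis (2 * pi / real m)"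

definition refl_s :: "nat \<Rightarrow> nat \<Rightarrow> complex poly poly \<Rightarrow> complex poly poly" where
  "refl_s m j q = subst2 q (const2 (- (zeta m ^ j)) * Zbv) (const2 (- inverse (zeta m ^ j)) * Zv)"

text \<open>Dunkl operator Y; the division is exact polynomial division in C[z,zbar].\<close>
definition dunklY :: "nat \<Rightarrow> complex \<Rightarrow> complex poly poly \<Rightarrow> complex poly poly" where
  "dunklY m c q = pderiv q - const2 c *
     (\<Sum>j<m. (q - refl_s m j q) div (Zv + const2 (zeta m ^ j) * Zbv))"

end

theory Submission
  imports Defs
begin

lemma const2_mult: "const2 (x*y) = const2 x * const2 y" by (simp add: const2_def)
lemma const2_add: "const2 (x+y) = const2 x + const2 y" by (simp add: const2_def)
lemma const2_1: "const2 1 = 1" by (simp add: const2_def one_pCons)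
lemma const2_0: "const2 0 = 0" by (simp add: const2_def)
lemma const2_minus: "const2 (-x) = - const2 x" by (simp add: const2_def)
lemma const2_pow: "const2 (x^n) = const2 x ^ n" by (induct n) (simp_all add: const2_1 const2_mult)
lemma const2_sum: "const2 (sum f A) = (\<Sum>x\<in>A. const2 (f x))"
  by (induct A rule: infinite_finite_induct) (simp_all add: const2_0 const2_add)
lemma const2_of_nat: "const2 (of_nat n) = of_nat n" by (simp add: const2_def of_nat_poly)
lemma Zv_pow: "Zv ^ a = monom 1 a" unfolding Zv_def by (simp add: monom_altdef)
lemma Zbv_pow: "Zbv ^ b = [:monom 1 b:]" unfolding Zbv_def by (simp add: monom_altdef poly_const_pow)
lemma mono_eq: "Zv ^ a * Zbv ^ b = monom (monom 1 b) a"
  by (simp add: Zv_pow Zbv_pow mult.commute smult_monom)  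
lemma subst2_mono: "subst2 (Zv ^ a * Zbv ^ b) u v = v ^ b * u ^ a"
proof -
  have "subst2 (Zv ^ a * Zbv ^ b) u v = (\<Sum>i\<le>a. if i = a then v ^ b * u ^ a else 0)"
    unfolding subst2_def mono_eq
    by (intro sum.cong) (auto simp: degree_monom_eq coeff_monom map_poly_monom const2_0 const2_1 poly_monom)
  also have "\<dots> = v ^ b * u ^ a" by simp
  finally show ?thesis .
qed
lemma pderiv_mono: "pderiv (Zv ^ a * Zbv ^ b) = const2 (of_nat a) * Zv ^ (a - 1) * Zbv ^ b"
  by (simp add: Zbv_pow Zv_def const2_of_nat of_nat_poly pderiv_smult pderiv_power pderiv_pCons mult.commute)
lemma zeta_pow: "zeta m ^ i = cis (2 * pi * real i / real m)"
  by (simp add: zeta_def DeMoivre mult_ac)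
lemma zeta_m: "m > 0 \<Longrightarrow> zeta m ^ m = 1"
  by (simp add: zeta_pow)
lemma zeta_nz: "zeta m \<noteq> 0" by (simp add: zeta_def)
lemma zeta_pow_eq_1: assumes "m > 0" shows "zeta m ^ i = 1 \<longleftrightarrow> m dvd i"
proof
  assume h: "zeta m ^ i = 1"
  have "zeta m ^ (m * (i div m) + i mod m) = zeta m ^ (i mod m)"
    using zeta_m[OF assms] by (simp only: power_add power_mult) simp
  then have "zeta m ^ i = zeta m ^ (i mod m)" by simp
  then have "cis (2 * pi * real (i mod m) / real m) = cis (2 * pi * real 0 / real m)"
    using h by (simp add: zeta_pow)
  moreover have "i mod m \<in> {..<m}" "0 \<in> {..<m}" using assms by auto
  ultimately have "i mod m = 0"
    using bij_betw_roots_unity[OF assms] unfolding bij_betw_def inj_on_def by blast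
  then show "m dvd i" by auto
next
  assume "m dvd i"
  then obtain t where "i = m * t" by auto
  then have "zeta m ^ i = (zeta m ^ m) ^ t" by (simp add: power_mult)
  then show "zeta m ^ i = 1" using zeta_m[OF assms] by simp
qed
lemma sum_root: assumes "x ^ m = (1::complex)" "m > 0"
  shows "(\<Sum>j<m. x ^ j) = (if x = 1 then of_nat m else 0)"
  using assms by (auto simp: geometric_sum)
lemma geom: "(x::'a::comm_ring_1)^n - y^n = (x - y) * (\<Sum>i<n. x^(n - Suc i) * y^i)"
proof -
  have "y^n - x^n = (y - x) * (\<Sum>i<n. x^(n - Suc i) * y^i)" by (rule power_diff_sumr2)
  then have "-(y^n - x^n) = -((y - x) * (\<Sum>i<n. x^(n - Suc i) * y^i))" by simp
  then show ?thesis by (simp add: algebra_simps)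
qed
lemma D_nz: "Zv + const2 w * Zbv \<noteq> 0"
proof
  assume "Zv + const2 w * Zbv = 0"
  then have "coeff (Zv + const2 w * Zbv) 1 = 0" by simp
  then show False by (simp add: Zv_def Zbv_def const2_def)
qed
lemma caseA: assumes "w \<noteq> 0"
  shows "Zv^(b+n) * Zbv^b - subst2 (Zv^(b+n) * Zbv^b) (const2 (-w) * Zbv) (const2 (- inverse w) * Zv)
   = (Zv + const2 w * Zbv) * (\<Sum>i<n. const2 ((-w)^i) * Zv^(b + n - Suc i) * Zbv^(b+i))"
proof -
  define u where "u = const2 (-w) * Zbv"
  define v where "v = const2 (- inverse w) * Zv"
  have vu: "v * u = Zv * Zbv"
  proof -
    have "v * u = const2 (- inverse w * - w) * (Zv * Zbv)" unfolding u_def v_def const2_mult by (simp add: mult_ac)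
    also have "- inverse w * - w = 1" using assms by simp
    finally show ?thesis by (simp add: const2_1)
  qed
  have s: "subst2 (Zv^(b+n) * Zbv^b) u v = Zv^b * Zbv^b * u^n"
  proof -
    have "v^b * u^(b+n) = (v*u)^b * u^n" by (simp add: power_add power_mult_distrib mult_ac)
    then show ?thesis unfolding subst2_mono vu by (simp add: power_mult_distrib)
  qed
  have Du: "Zv - u = Zv + const2 w * Zbv" unfolding u_def by (simp add: const2_minus)
  have "Zv^(b+n) * Zbv^b - Zv^b * Zbv^b * u^n = Zv^b * Zbv^b * (Zv^n - u^n)"
    by (simp add: power_add algebra_simps)
  also have "\<dots> = (Zv + const2 w * Zbv) * (Zv^b * Zbv^b * (\<Sum>i<n. Zv^(n - Suc i) * u^i))"
    unfolding geom[of Zv n u] Du by (simp add: mult_ac)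
  also have "Zv^b * Zbv^b * (\<Sum>i<n. Zv^(n - Suc i) * u^i) = (\<Sum>i<n. const2 ((-w)^i) * Zv^(b + n - Suc i) * Zbv^(b+i))"
    unfolding sum_distrib_left
  proof (intro sum.cong refl)
    fix i assume "i \<in> {..<n}"
    then have "b + n - Suc i = b + (n - Suc i)" by auto
    then show "Zv ^ b * Zbv ^ b * (Zv ^ (n - Suc i) * u ^ i) = const2 ((- w) ^ i) * Zv ^ (b + n - Suc i) * Zbv ^ (b + i)"
      unfolding u_def by (simp add: power_add const2_pow power_mult_distrib mult_ac)
  qed
  finally show ?thesis using s unfolding u_def v_def by simp
qed
lemma caseB: assumes "w \<noteq> 0"
  shows "Zv^a * Zbv^(a+n) - subst2 (Zv^a * Zbv^(a+n)) (const2 (-w) * Zbv) (const2 (- inverse w) * Zv)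
   = (Zv + const2 w * Zbv) * (\<Sum>i<n. const2 (inverse w * (- inverse w)^i) * Zv^(a + i) * Zbv^(a + n - Suc i))"
proof -
  define u where "u = const2 (-w) * Zbv"
  define v where "v = const2 (- inverse w) * Zv"
  have vu: "v * u = Zv * Zbv"
  proof -
    have "v * u = const2 (- inverse w * - w) * (Zv * Zbv)" unfolding u_def v_def const2_mult by (simp add: mult_ac)
    also have "- inverse w * - w = 1" using assms by simp
    finally show ?thesis by (simp add: const2_1)
  qed
  have s: "subst2 (Zv^a * Zbv^(a+n)) u v = Zv^a * Zbv^a * v^n"
  proof -
    have "v^(a+n) * u^a = (v*u)^a * v^n" by (simp add: power_add power_mult_distrib mult_ac)
    then show ?thesis unfolding subst2_mono vu by (simp add: power_mult_distrib)
  qed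
  have Dv: "Zbv - v = const2 (inverse w) * (Zv + const2 w * Zbv)"
  proof -
    have "const2 (inverse w) * (Zv + const2 w * Zbv) = const2 (inverse w) * Zv + const2 (inverse w * w) * Zbv"
      by (simp add: const2_mult algebra_simps)
    also have "inverse w * w = 1" using assms by simp
    finally show ?thesis unfolding v_def by (simp add: const2_minus const2_1)
  qed
  have "Zv^a * Zbv^(a+n) - Zv^a * Zbv^a * v^n = Zv^a * Zbv^a * (Zbv^n - v^n)"
    by (simp add: power_add algebra_simps)
  also have "\<dots> = (Zv + const2 w * Zbv) * (const2 (inverse w) * Zv^a * Zbv^a * (\<Sum>i<n. Zbv^(n - Suc i) * v^i))"
    unfolding geom[of Zbv n v] Dv by (simp add: mult_ac)
  also have "const2 (inverse w) * Zv^a * Zbv^a * (\<Sum>i<n. Zbv^(n - Suc i) * v^i) = (\<Sum>i<n. const2 (inverse w * (- inverse w)^i) * Zv^(a + i) * Zbv^(a + n - Suc i))"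
    unfolding sum_distrib_left
  proof (intro sum.cong refl)
    fix i assume "i \<in> {..<n}"
    then have "a + n - Suc i = a + (n - Suc i)" by auto
    then show "const2 (inverse w) * Zv^a * Zbv^a * (Zbv^(n - Suc i) * v^i) = const2 (inverse w * (- inverse w)^i) * Zv^(a + i) * Zbv^(a + n - Suc i)"
      unfolding v_def by (simp add: power_add const2_pow const2_mult power_mult_distrib mult_ac)
  qed
  finally show ?thesis using s unfolding u_def v_def by simp
qed

lemma pow_swap: "((x::complex)^j)^i = (x^i)^j"
  by (metis power_mult mult.commute)
lemma rootA: assumes "m > 0"
  shows "(\<Sum>j<m. (-(zeta m ^ j))^i) = (if m dvd i then of_nat m * (-1)^i else 0)"
proof -
  have "(\<Sum>j<m. (-(zeta m ^ j))^i) = (-1)^i * (\<Sum>j<m. (zeta m ^ i)^j)"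
    unfolding sum_distrib_left by (intro sum.cong refl) (simp only: power_minus[of "zeta m ^ _"] pow_swap)
  also have "(\<Sum>j<m. (zeta m ^ i)^j) = (if zeta m ^ i = 1 then of_nat m else 0)"
  proof (rule sum_root[OF _ assms])
    show "(zeta m ^ i) ^ m = 1" using zeta_m[OF assms] by (metis pow_swap power_one)
  qed
  finally show ?thesis using zeta_pow_eq_1[OF assms] by simp
qed
lemma rootB: assumes "m > 0"
  shows "(\<Sum>j<m. inverse (zeta m ^ j) * (- inverse (zeta m ^ j))^i) = (if m dvd Suc i then of_nat m * (-1)^i else 0)"
proof -
  have "(\<Sum>j<m. inverse (zeta m ^ j) * (- inverse (zeta m ^ j))^i) = (-1)^i * (\<Sum>j<m. (inverse (zeta m ^ Suc i))^j)"
    unfolding sum_distrib_left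
  proof (intro sum.cong refl)
    fix j
    have "inverse (zeta m ^ j) * (- inverse (zeta m ^ j))^i = (-1)^i * inverse (zeta m ^ j) ^ Suc i"
      by (simp only: power_minus[of "inverse (zeta m ^ j)"] power_Suc mult_ac)
    also have "inverse (zeta m ^ j) ^ Suc i = (inverse (zeta m ^ Suc i))^j"
      by (simp only: power_inverse pow_swap)
    finally show "inverse (zeta m ^ j) * (- inverse (zeta m ^ j))^i = (-1)^i * (inverse (zeta m ^ Suc i))^j" .
  qed
  also have "(\<Sum>j<m. (inverse (zeta m ^ Suc i))^j) = (if inverse (zeta m ^ Suc i) = 1 then of_nat m else 0)"
  proof (rule sum_root[OF _ assms])
    have "(inverse (zeta m ^ Suc i))^m = inverse ((zeta m ^ m) ^ Suc i)"
      by (simp only: power_inverse pow_swap)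
    then show "(inverse (zeta m ^ Suc i))^m = 1" using zeta_m[OF assms] by simp
  qed
  also have "(inverse (zeta m ^ Suc i) = 1) = (m dvd Suc i)"
    using zeta_pow_eq_1[OF assms, of "Suc i"] by (metis inverse_1 inverse_inverse_eq)
  finally show ?thesis by simp
qed
lemma sumA: assumes "m > 0"
  shows "(\<Sum>j<m. (Zv^(b+n) * Zbv^b - refl_s m j (Zv^(b+n) * Zbv^b)) div (Zv + const2 (zeta m ^ j) * Zbv))
   = const2 (of_nat m) * (\<Sum>i<n. if m dvd i then const2 ((-1)^i) * Zv^(b + n - Suc i) * Zbv^(b+i) else 0)"
proof -
  have "(\<Sum>j<m. (Zv^(b+n) * Zbv^b - refl_s m j (Zv^(b+n) * Zbv^b)) div (Zv + const2 (zeta m ^ j) * Zbv))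
     = (\<Sum>j<m. \<Sum>i<n. const2 ((-(zeta m ^ j))^i) * (Zv^(b + n - Suc i) * Zbv^(b+i)))"
  proof (intro sum.cong refl)
    fix j
    show "(Zv^(b+n) * Zbv^b - refl_s m j (Zv^(b+n) * Zbv^b)) div (Zv + const2 (zeta m ^ j) * Zbv)
      = (\<Sum>i<n. const2 ((-(zeta m ^ j))^i) * (Zv^(b + n - Suc i) * Zbv^(b+i)))"
      unfolding refl_s_def caseA[OF power_not_zero[OF zeta_nz]]
      by (subst nonzero_mult_div_cancel_left[OF D_nz]) (simp add: mult_ac)
  qed
  also have "\<dots> = (\<Sum>i<n. const2 (\<Sum>j<m. (-(zeta m ^ j))^i) * (Zv^(b + n - Suc i) * Zbv^(b+i)))"
    by (subst sum.swap) (simp add: const2_sum sum_distrib_right)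
  also have "\<dots> = (\<Sum>i<n. const2 (of_nat m) * (if m dvd i then const2 ((-1)^i) * Zv^(b + n - Suc i) * Zbv^(b+i) else 0))"
    by (intro sum.cong refl) (simp add: rootA[OF assms] const2_mult const2_0 mult_ac)
  finally show ?thesis by (simp add: sum_distrib_left)
qed
lemma sumB: assumes "m > 0"
  shows "(\<Sum>j<m. (Zv^a * Zbv^(a+n) - refl_s m j (Zv^a * Zbv^(a+n))) div (Zv + const2 (zeta m ^ j) * Zbv))
   = const2 (of_nat m) * (\<Sum>i<n. if m dvd Suc i then const2 ((-1)^i) * Zv^(a + i) * Zbv^(a + n - Suc i) else 0)"
proof -
  have "(\<Sum>j<m. (Zv^a * Zbv^(a+n) - refl_s m j (Zv^a * Zbv^(a+n))) div (Zv + const2 (zeta m ^ j) * Zbv))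
     = (\<Sum>j<m. \<Sum>i<n. const2 (inverse (zeta m ^ j) * (- inverse (zeta m ^ j))^i) * (Zv^(a + i) * Zbv^(a + n - Suc i)))"
  proof (intro sum.cong refl)
    fix j
    show "(Zv^a * Zbv^(a+n) - refl_s m j (Zv^a * Zbv^(a+n))) div (Zv + const2 (zeta m ^ j) * Zbv)
      = (\<Sum>i<n. const2 (inverse (zeta m ^ j) * (- inverse (zeta m ^ j))^i) * (Zv^(a + i) * Zbv^(a + n - Suc i)))"
      unfolding refl_s_def caseB[OF power_not_zero[OF zeta_nz]]
      by (subst nonzero_mult_div_cancel_left[OF D_nz]) (simp add: mult_ac)
  qed
  also have "\<dots> = (\<Sum>i<n. const2 (\<Sum>j<m. inverse (zeta m ^ j) * (- inverse (zeta m ^ j))^i) * (Zv^(a + i) * Zbv^(a + n - Suc i)))"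
    by (subst sum.swap) (simp add: const2_sum sum_distrib_right)
  also have "\<dots> = (\<Sum>i<n. const2 (of_nat m) * (if m dvd Suc i then const2 ((-1)^i) * Zv^(a + i) * Zbv^(a + n - Suc i) else 0))"
    by (intro sum.cong refl) (simp add: rootB[OF assms] const2_mult const2_0 mult_ac)
  finally show ?thesis by (simp add: sum_distrib_left)
qed
lemma reA: assumes "m > 0" "b \<le> a"
  shows "(\<Sum>i<a-b. if m dvd i then const2 ((-1)^i) * Zv^(b + (a-b) - Suc i) * Zbv^(b+i) else 0)
   = (\<Sum>k\<in>{k::nat. int (m * k) \<le> int a - int b - 1}.
                  const2 ((-1) ^ (m * k)) * Zv ^ (a - m * k - 1) * Zbv ^ (b + m * k))"
proof -
  let ?g = "\<lambda>i. const2 ((-1)^i) * Zv^(b + (a-b) - Suc i) * Zbv^(b+i)"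
  let ?K = "{k::nat. int (m * k) \<le> int a - int b - 1}"
  have "(\<Sum>i<a-b. if m dvd i then ?g i else 0) = sum ?g {i\<in>{..<a-b}. m dvd i}"
    by (rule sym, rule sum.inter_filter) simp
  also have "{i\<in>{..<a-b}. m dvd i} = (\<lambda>k. m*k) ` ?K"
  proof (intro set_eqI iffI)
    fix i assume "i \<in> {i\<in>{..<a-b}. m dvd i}"
    then obtain k where k: "i = m*k" "i < a - b" by auto
    have "int (m * k) \<le> int a - int b - 1" using k assms by linarith
    then show "i \<in> (\<lambda>k. m*k) ` ?K" using k by (intro image_eqI[of _ _ k]) auto
  next
    fix i assume "i \<in> (\<lambda>k. m*k) ` ?K"
    then obtain k where k: "i = m*k" "int (m * k) \<le> int a - int b - 1" by blast
    then have "i < a - b" using assms by linarith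
    then show "i \<in> {i\<in>{..<a-b}. m dvd i}" using k by auto
  qed
  also have "sum ?g ((\<lambda>k. m*k) ` ?K) = sum (?g \<circ> (\<lambda>k. m*k)) ?K"
    by (rule sum.reindex) (use assms in \<open>auto simp: inj_on_def\<close>)
  also have "\<dots> = (\<Sum>k\<in>?K. const2 ((-1) ^ (m * k)) * Zv ^ (a - m * k - 1) * Zbv ^ (b + m * k))"
    by (intro sum.cong refl) (use assms in auto)
  finally show ?thesis .
qed
lemma reB: assumes "m > 0" "a \<le> b"
  shows "(\<Sum>i<b-a. if m dvd Suc i then const2 ((-1)^i) * Zv^(a + i) * Zbv^(a + (b-a) - Suc i) else 0)
   = - (\<Sum>k\<in>{k::nat. 1 \<le> k \<and> m * k \<le> b - a}.
                  const2 ((-1) ^ (m * k)) * Zv ^ (a + m * k - 1) * Zbv ^ (b - m * k))"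
proof -
  let ?g = "\<lambda>i. const2 ((-1)^i) * Zv^(a + i) * Zbv^(a + (b-a) - Suc i)"
  let ?K = "{k::nat. 1 \<le> k \<and> m * k \<le> b - a}"
  have "(\<Sum>i<b-a. if m dvd Suc i then ?g i else 0) = sum ?g {i\<in>{..<b-a}. m dvd Suc i}"
    by (rule sym, rule sum.inter_filter) simp
  also have "{i\<in>{..<b-a}. m dvd Suc i} = (\<lambda>k. m*k - 1) ` ?K"
  proof (intro set_eqI iffI)
    fix i assume "i \<in> {i\<in>{..<b-a}. m dvd Suc i}"
    then obtain k where k: "Suc i = m*k" "i < b - a" by auto
    then have "1 \<le> k" by (cases k) auto
    with k show "i \<in> (\<lambda>k. m*k - 1) ` ?K" using assms by (intro image_eqI[of _ _ k]) auto
  next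
    fix i assume "i \<in> (\<lambda>k. m*k - 1) ` ?K"
    then obtain k where k: "i = m*k - 1" "1 \<le> k" "m * k \<le> b - a" by auto
    have "1 \<le> m * k" using k assms by simp
    then have "Suc i = m * k" using k by simp
    moreover have "i < b - a" using k \<open>1 \<le> m*k\<close> by linarith
    ultimately show "i \<in> {i\<in>{..<b-a}. m dvd Suc i}" by (metis (mono_tags, lifting) dvd_triv_left lessThan_iff mem_Collect_eq)
  qed
  also have "sum ?g ((\<lambda>k. m*k - 1) ` ?K) = sum (?g \<circ> (\<lambda>k. m*k - 1)) ?K"
  proof (rule sum.reindex)
    show "inj_on (\<lambda>k. m*k - 1) ?K"
    proof (rule inj_onI)
      fix x y assume "x \<in> ?K" "y \<in> ?K" "m*x - 1 = m*y - 1"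
      moreover have "1 \<le> m*x" "1 \<le> m*y" using \<open>x \<in> ?K\<close> \<open>y \<in> ?K\<close> assms by auto
      ultimately have "m * x = m * y" by linarith
      then show "x = y" using assms by simp
    qed
  qed
  also have "\<dots> = (\<Sum>k\<in>?K. - (const2 ((-1) ^ (m * k)) * Zv ^ (a + m * k - 1) * Zbv ^ (b - m * k)))"
  proof (intro sum.cong refl)
    fix k assume "k \<in> ?K"
    then have h: "1 \<le> m * k" "m * k \<le> b - a" using assms by auto
    then have e1: "a + (b - a) - Suc (m*k - 1) = b - m*k" "a + (m*k - 1) = a + m*k - 1" using assms by auto
    have e2: "(-1::complex)^(m*k - 1) = - ((-1)^(m*k))"
    proof -
      have "(-1::complex)^(m*k) = (-1)^(Suc (m*k - 1))" using h by simp
      then show ?thesis by simp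
    qed
    show "(?g \<circ> (\<lambda>k. m*k - 1)) k = - (const2 ((-1) ^ (m * k)) * Zv ^ (a + m * k - 1) * Zbv ^ (b - m * k))"
      unfolding comp_def e1 e2 by (simp add: const2_minus)
  qed
  finally show ?thesis by (simp add: sum_negf)
qed

theorem proposition2p3:
  fixes m a b :: nat and c :: complex
  assumes "m \<ge> 2"
  shows "(b \<le> a \<longrightarrow>
           dunklY m c (Zv ^ a * Zbv ^ b) =
             const2 (of_nat a) * Zv ^ (a - 1) * Zbv ^ b
             - const2 (of_nat m * c) *
               (\<Sum>k\<in>{k::nat. int (m * k) \<le> int a - int b - 1}.
                  const2 ((-1) ^ (m * k)) * Zv ^ (a - m * k - 1) * Zbv ^ (b + m * k)))
       \<and> (a \<le> b \<longrightarrow>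
           dunklY m c (Zv ^ a * Zbv ^ b) =
             const2 (of_nat a) * Zv ^ (a - 1) * Zbv ^ b
             + const2 (of_nat m * c) *
               (\<Sum>k\<in>{k::nat. 1 \<le> k \<and> m * k \<le> b - a}.
                  const2 ((-1) ^ (m * k)) * Zv ^ (a + m * k - 1) * Zbv ^ (b - m * k)))"
proof (intro conjI impI)
  have m0: "m > 0" using assms by simp
  assume ba: "b \<le> a"
  then have aa: "a = b + (a - b)" by simp
  have "(\<Sum>j<m. (Zv^a * Zbv^b - refl_s m j (Zv^a * Zbv^b)) div (Zv + const2 (zeta m ^ j) * Zbv))
     = const2 (of_nat m) * (\<Sum>k\<in>{k::nat. int (m * k) \<le> int a - int b - 1}.
                  const2 ((-1) ^ (m * k)) * Zv ^ (a - m * k - 1) * Zbv ^ (b + m * k))"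
    using sumA[OF m0, of b "a - b"] reA[OF m0 ba] aa by simp
  then show "dunklY m c (Zv ^ a * Zbv ^ b) =
             const2 (of_nat a) * Zv ^ (a - 1) * Zbv ^ b
             - const2 (of_nat m * c) *
               (\<Sum>k\<in>{k::nat. int (m * k) \<le> int a - int b - 1}.
                  const2 ((-1) ^ (m * k)) * Zv ^ (a - m * k - 1) * Zbv ^ (b + m * k))"
    unfolding dunklY_def pderiv_mono by (simp add: const2_mult mult_ac)
next
  have m0: "m > 0" using assms by simp
  assume ab: "a \<le> b"
  then have bb: "b = a + (b - a)" by simp
  have "(\<Sum>j<m. (Zv^a * Zbv^b - refl_s m j (Zv^a * Zbv^b)) div (Zv + const2 (zeta m ^ j) * Zbv))
     = - (const2 (of_nat m) * (\<Sum>k\<in>{k::nat. 1 \<le> k \<and> m * k \<le> b - a}.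
                  const2 ((-1) ^ (m * k)) * Zv ^ (a + m * k - 1) * Zbv ^ (b - m * k)))"
    using sumB[OF m0, of a "b - a"] reB[OF m0 ab] bb by simp
  then show "dunklY m c (Zv ^ a * Zbv ^ b) =
             const2 (of_nat a) * Zv ^ (a - 1) * Zbv ^ b
             + const2 (of_nat m * c) *
               (\<Sum>k\<in>{k::nat. 1 \<le> k \<and> m * k \<le> b - a}.
                  const2 ((-1) ^ (m * k)) * Zv ^ (a + m * k - 1) * Zbv ^ (b - m * k))"
    unfolding dunklY_def pderiv_mono by (simp add: const2_mult mult_ac)
qed
end
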